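(* Let $G$ be a finite group (written additively, not necessarily abelian), let $f:G\to G$, and let $S\subseteq G$ with $\#S=k\ge u(f)$. For each function $g:G\to G$ satisfying (a) $\mathrm{Im}(g)=S$ and (b) $g(x)\ne g(y)$ whenever $x\ne y$ and $f(x)=f(y)$, let $\mathcal{A}_g=\{(r,c)\in G\times \mathrm{Im}(f): \exists x\in G \text{ with } f(x)=c,\ g(x)+f(x)=r\}$. Then $g\mapsto \mathcal{A}_g$ maps the set of functions satisfying (a) and (b) onto the set of all admissible subtables of $M_f$ with value set $S$, and each admissible subtable with value set $S$ is the image of exactly $\prod_{t=1}^{u(f)} (t!)^{\#P_t}$ such functions $g$. Moreover, if two such functions $g,h$ have $\mathcal{A}_g=\mathcal{A}_h$, then $\mathrm{Im}(g)=\mathrm{Im}(h)$ and $\mathrm{Im}(g+f)=\mathrm{Im}(h+f)$.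
   Context: For $f:G\to G$: $\mathrm{Im}(f)=\{f(x):x\in G\}$; $\mathrm{Preim}(f,b)=\{x\in G: f(x)=b\}$; $u(f)=\max_{b\in G}\#\mathrm{Preim}(f,b)$; for $0\le t\le u(f)$, $P_t=\{b\in G:\#\mathrm{Preim}(f,b)=t\}$. The subtraction table $M_f$ has rows indexed by $G$ and columns indexed by $\mathrm{Im}(f)$, with entry $m_{r,c}=r-c$ (i.e. $r+(-c)$) in position $(r,c)$. A subtable is any set $\mathcal{A}$ of positions $(r,c)\in G\times\mathrm{Im}(f)$ (the entry at that position being $m_{r,c}$). A subtable $\mathcal{A}$ is an admissible subtable with value set $S$ if (A1) $\{m_{r,c}:(r,c)\in\mathcal{A}\}=S$, and (A2) for every $c\in\mathrm{Im}(f)$ there are exactly $\#\mathrm{Preim}(f,c)$ elements $r\in G$ with $(r,c)\in\mathcal{A}$. Functions $g+f$ are taken pointwise. *)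

theory Defs
  imports Main
begin

definition Preim :: "('a \<Rightarrow> 'a) \<Rightarrow> 'a \<Rightarrow> 'a set" where
  "Preim f b = {x. f x = b}"

definition u :: "('a::finite \<Rightarrow> 'a) \<Rightarrow> nat" where
  "u f = Max ((\<lambda>b. card (Preim f b)) ` UNIV)"

definition P :: "('a::finite \<Rightarrow> 'a) \<Rightarrow> nat \<Rightarrow> 'a set" where
  "P f t = {b. card (Preim f b) = t}"

text \<open>Entry of the subtraction table at position (r,c).\<close>
definition m :: "'a::group_add \<Rightarrow> 'a \<Rightarrow> 'a" where
  "m r c = r - c"

definition admissible :: "('a::{group_add,finite} \<Rightarrow> 'a) \<Rightarrow> ('a \<times> 'a) set \<Rightarrow> 'a set \<Rightarrow> bool" where
  "admissible f A S \<longleftrightarrow>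
     A \<subseteq> UNIV \<times> range f \<and>
     (\<lambda>(r, c). m r c) ` A = S \<and>
     (\<forall>c\<in>range f. card {r. (r, c) \<in> A} = card (Preim f c))"

definition good :: "('a \<Rightarrow> 'a) \<Rightarrow> 'a set \<Rightarrow> ('a \<Rightarrow> 'a) \<Rightarrow> bool" where
  "good f S g \<longleftrightarrow> range g = S \<and> (\<forall>x y. x \<noteq> y \<and> f x = f y \<longrightarrow> g x \<noteq> g y)"

definition Ag :: "('a::group_add \<Rightarrow> 'a) \<Rightarrow> ('a \<Rightarrow> 'a) \<Rightarrow> ('a \<times> 'a) set" where
  "Ag f g = {(r, c). c \<in> range f \<and> (\<exists>x. f x = c \<and> g x + f x = r)}"

end

theory Submission imports Defs "HOL-Library.FuncSet" begin
lemma card_inj_funcset_aux: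
  assumes "finite S" "finite T" "card S \<le> card T"
  shows "card {h \<in> S \<rightarrow>\<^sub>E T. inj_on h S} * fact (card T - card S) = fact (card T)"
  using assms
proof (induct S arbitrary: T rule: finite_induct)
  case empty
  then show ?case by (simp add: PiE_empty_domain)
next
  case (insert x S)
  have fin: "finite {g \<in> S \<rightarrow>\<^sub>E (T - {y}). inj_on g S}" for y
    using insert by (intro finite_subset[OF _ finite_PiE[of S "\<lambda>_. T - {y}"]]) auto
  have T0: "card T \<ge> 1" using insert by simp
  have IH: "card {g \<in> S \<rightarrow>\<^sub>E (T - {y}). inj_on g S} * fact (card T - Suc (card S)) = fact (card T - 1)"
    if "y \<in> T" for y
  proof -
    have "card (T - {y}) = card T - 1" using that insert by simp
    moreover have "card S \<le> card (T - {y})" using that insert by simp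
    ultimately show ?thesis using insert.hyps(3)[of "T - {y}"] insert.prems by simp
  qed
  have "{h \<in> insert x S \<rightarrow>\<^sub>E T. inj_on h (insert x S)} =
    (\<lambda>(y, g). g(x:=y)) ` {(y, g). y \<in> T \<and> g \<in> S \<rightarrow>\<^sub>E (T - {y}) \<and> inj_on g S}"
    using extensional_funcset_extend_domain_inj_on_eq[OF insert.hyps(2), of T] by simp
  hence "card {h \<in> insert x S \<rightarrow>\<^sub>E T. inj_on h (insert x S)} =
     card {(y, g). y \<in> T \<and> g \<in> S \<rightarrow>\<^sub>E (T - {y}) \<and> inj_on g S}"
    using extensional_funcset_extend_domain_inj_onI[OF insert.hyps(2), of T]
    by (simp add: card_image)
  also have "{(y, g). y \<in> T \<and> g \<in> S \<rightarrow>\<^sub>E (T - {y}) \<and> inj_on g S}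
     = Sigma T (\<lambda>y. {g \<in> S \<rightarrow>\<^sub>E (T - {y}). inj_on g S})" by auto
  also have "card \<dots> = (\<Sum>y\<in>T. card {g \<in> S \<rightarrow>\<^sub>E (T - {y}). inj_on g S})"
    using insert fin by (simp add: card_SigmaI)
  finally have "card {h \<in> insert x S \<rightarrow>\<^sub>E T. inj_on h (insert x S)} * fact (card T - card (insert x S))
     = (\<Sum>y\<in>T. card {g \<in> S \<rightarrow>\<^sub>E (T - {y}). inj_on g S} * fact (card T - Suc (card S)))"
    using insert by (simp add: sum_distrib_right)
  also have "\<dots> = (\<Sum>y\<in>T. fact (card T - 1))" using IH by simp
  also have "\<dots> = card T * fact (card T - 1)" by simp
  also have "\<dots> = fact (card T)" using T0 by (cases "card T") auto
  finally show ?case .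
qed

lemma card_bij_funcset:
  assumes "finite S" "finite T" "card S = card T"
  shows "card {h \<in> S \<rightarrow>\<^sub>E T. inj_on h S} = fact (card S)"
  using card_inj_funcset_aux[OF assms(1,2)] assms(3) by simp

lemma Ag_admissible:
  fixes f :: "'a::{group_add,finite} \<Rightarrow> 'a"
  assumes "good f S g"
  shows "admissible f (Ag f g) S"
proof -
  have inj: "inj_on g (Preim f c)" for c
    using assms unfolding good_def inj_on_def Preim_def by blast
  have "(\<lambda>(r, c). m r c) ` Ag f g = range g"
  proof
    show "(\<lambda>(r, c). m r c) ` Ag f g \<subseteq> range g"
      by (auto simp: Ag_def m_def)
    show "range g \<subseteq> (\<lambda>(r, c). m r c) ` Ag f g"
    proof
      fix y assume "y \<in> range g"
      then obtain x where x: "y = g x" by auto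
      have "(g x + f x, f x) \<in> Ag f g" by (auto simp: Ag_def)
      moreover have "m (g x + f x) (f x) = y" using x by (simp add: m_def)
      ultimately show "y \<in> (\<lambda>(r, c). m r c) ` Ag f g" by force
    qed
  qed
  moreover have "card {r. (r, c) \<in> Ag f g} = card (Preim f c)" if "c \<in> range f" for c
  proof -
    have "{r. (r, c) \<in> Ag f g} = (\<lambda>x. g x + c) ` Preim f c"
      using that by (auto simp: Ag_def Preim_def)
    moreover have "inj_on (\<lambda>x. g x + c) (Preim f c)"
      using inj by (auto simp: inj_on_def)
    ultimately show ?thesis by (simp add: card_image)
  qed
  ultimately show ?thesis using assms by (auto simp: admissible_def good_def Ag_def)
qed

lemma count_good:
  fixes f :: "'a::{group_add,finite} \<Rightarrow> 'a"
  assumes adm: "admissible f A S"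
  shows "card {g. good f S g \<and> Ag f g = A} = (\<Prod>c\<in>range f. fact (card (Preim f c)))"
proof -
  define T where "T c = (\<lambda>r. r - c) ` {r. (r, c) \<in> A}" for c
  define B where "B c = {h \<in> Preim f c \<rightarrow>\<^sub>E T c. inj_on h (Preim f c)}" for c
  define \<Phi> where "\<Phi> g = (\<lambda>c\<in>range f. \<lambda>x\<in>Preim f c. g x)" for g :: "'a \<Rightarrow> 'a"
  define \<Psi> where "\<Psi> F = (\<lambda>x. F (f x) x)" for F :: "'a \<Rightarrow> 'a \<Rightarrow> 'a"
  have AS: "A \<subseteq> UNIV \<times> range f" and mA: "(\<lambda>(r, c). m r c) ` A = S"
    and cA: "\<And>c. c \<in> range f \<Longrightarrow> card {r. (r, c) \<in> A} = card (Preim f c)"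
    using adm by (auto simp: admissible_def)
  have cT: "card (T c) = card (Preim f c)" if "c \<in> range f" for c
  proof -
    have "inj_on (\<lambda>r. r - c) {r. (r, c) \<in> A}" by (auto simp: inj_on_def)
    then show ?thesis using cA[OF that] by (simp add: T_def card_image)
  qed
  have memT: "r - c \<in> T c \<longleftrightarrow> (r, c) \<in> A" for r c
    by (auto simp: T_def) (metis diff_add_cancel)
  have bij: "bij_betw \<Phi> {g. good f S g \<and> Ag f g = A} (PiE (range f) B)"
  proof (rule bij_betw_byWitness[where f'=\<Psi>])
    show "\<forall>g\<in>{g. good f S g \<and> Ag f g = A}. \<Psi> (\<Phi> g) = g"
      by (auto simp: \<Psi>_def \<Phi>_def Preim_def)
    show "\<forall>F\<in>PiE (range f) B. \<Phi> (\<Psi> F) = F"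
    proof
      fix F assume F: "F \<in> PiE (range f) B"
      show "\<Phi> (\<Psi> F) = F"
      proof (rule ext)
        fix c
        show "\<Phi> (\<Psi> F) c = F c"
        proof (cases "c \<in> range f")
          case True
          then have "F c \<in> B c" using F by auto
          then have "F c \<in> Preim f c \<rightarrow>\<^sub>E T c" by (simp add: B_def)
          then have extF: "F c \<in> extensional (Preim f c)" by (simp add: PiE_def)
          show ?thesis
          proof (rule ext)
            fix x show "\<Phi> (\<Psi> F) c x = F c x"
            proof (cases "x \<in> Preim f c")
              case True2: True
              then have "f x = c" by (simp add: Preim_def)
              then show ?thesis using True True2 by (simp add: \<Phi>_def \<Psi>_def)
            next
              case False2: False
              then have "F c x = undefined" using extF by (simp add: extensional_def)
              then show ?thesis using True False2 by (simp add: \<Phi>_def)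
            qed
          qed
        next
          case False
          then show ?thesis using F by (auto simp: \<Phi>_def)
        qed
      qed
    qed
    show "\<Phi> ` {g. good f S g \<and> Ag f g = A} \<subseteq> PiE (range f) B"
    proof
      fix F assume "F \<in> \<Phi> ` {g. good f S g \<and> Ag f g = A}"
      then obtain g where g: "good f S g" "Ag f g = A" and F: "F = \<Phi> g" by auto
      have "F c \<in> B c" if c: "c \<in> range f" for c
      proof -
        have "g x \<in> T c" if "x \<in> Preim f c" for x
        proof -
          have "(g x + c, c) \<in> Ag f g" using that c by (auto simp: Ag_def Preim_def)
          then have "(g x + c) - c \<in> T c" using g memT[of "g x + c" c] by simp
          then show ?thesis by (simp add: algebra_simps)
        qed
        moreover have "inj_on g (Preim f c)"
          using g(1) unfolding good_def inj_on_def Preim_def by blast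
        ultimately show ?thesis using c
          by (auto simp: F \<Phi>_def B_def inj_on_def)
      qed
      moreover have "F \<in> extensional (range f)" by (simp add: F \<Phi>_def)
      ultimately show "F \<in> PiE (range f) B" by (auto simp: PiE_def)
    qed
    show "\<Psi> ` PiE (range f) B \<subseteq> {g. good f S g \<and> Ag f g = A}"
    proof
      fix g assume "g \<in> \<Psi> ` PiE (range f) B"
      then obtain F where F: "F \<in> PiE (range f) B" and g: "g = \<Psi> F" by auto
      have img: "g ` Preim f c = T c" if c: "c \<in> range f" for c
      proof -
        have FB: "F c \<in> B c" using F c by auto
        have eq: "g x = F c x" if "x \<in> Preim f c" for x
          using that by (simp add: g \<Psi>_def Preim_def)
        have sub: "g ` Preim f c \<subseteq> T c" using FB eq by (auto simp: B_def)
        have "inj_on g (Preim f c)" using FB eq by (auto simp: B_def inj_on_def)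
        then have "card (g ` Preim f c) = card (T c)" using cT[OF c] by (simp add: card_image)
        then show ?thesis using sub by (intro card_subset_eq) auto
      qed
      have injf: "g x \<noteq> g y" if "x \<noteq> y" "f x = f y" for x y
      proof -
        have FB: "F (f x) \<in> B (f x)" using F by auto
        then have "inj_on (F (f x)) (Preim f (f x))" by (simp add: B_def)
        then show ?thesis using that by (auto simp: g \<Psi>_def Preim_def inj_on_def)
      qed
      have "range g = S"
      proof
        show "range g \<subseteq> S"
        proof
          fix y assume "y \<in> range g"
          then obtain x where x: "y = g x" by auto
          have "y \<in> T (f x)" using img[of "f x"] x by (auto simp: Preim_def)
          then obtain r where "(r, f x) \<in> A" "y = r - f x" by (auto simp: T_def)
          then show "y \<in> S" using mA by (force simp: m_def)
        qed
        show "S \<subseteq> range g"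
        proof
          fix y assume "y \<in> S"
          then obtain r c where rc: "(r, c) \<in> A" "y = r - c" using mA by (auto simp: m_def)
          then have c: "c \<in> range f" using AS by auto
          have "y \<in> T c" using rc by (auto simp: T_def)
          then show "y \<in> range g" using img[OF c] by auto
        qed
      qed
      moreover have "Ag f g = A"
      proof (rule set_eqI)
        fix p :: "'a \<times> 'a"
        obtain r c where p: "p = (r, c)" by (cases p)
        have "p \<in> Ag f g \<longleftrightarrow> c \<in> range f \<and> r - c \<in> g ` Preim f c"
          by (auto simp: p Ag_def Preim_def algebra_simps intro!: image_eqI)
        also have "\<dots> \<longleftrightarrow> c \<in> range f \<and> (r, c) \<in> A" using img memT by auto
        also have "\<dots> \<longleftrightarrow> p \<in> A" using AS p by auto
        finally show "p \<in> Ag f g \<longleftrightarrow> p \<in> A" .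
      qed
      ultimately show "g \<in> {g. good f S g \<and> Ag f g = A}" using injf by (auto simp: good_def)
    qed
  qed
  have "card {g. good f S g \<and> Ag f g = A} = card (PiE (range f) B)"
    using bij by (rule bij_betw_same_card)
  also have "\<dots> = (\<Prod>c\<in>range f. card (B c))" by (simp add: card_PiE)
  also have "\<dots> = (\<Prod>c\<in>range f. fact (card (Preim f c)))"
  proof (rule prod.cong)
    fix c assume "c \<in> range f"
    then show "card (B c) = fact (card (Preim f c))"
      unfolding B_def using cT card_bij_funcset[of "Preim f c" "T c"] by simp
  qed simp
  finally show ?thesis .
qed

lemma prod_regroup:
  fixes f :: "'a::finite \<Rightarrow> 'a"
  shows "(\<Prod>c\<in>range f. fact (card (Preim f c)) :: nat) = (\<Prod>t = 1..u f. fact t ^ card (P f t))"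
proof -
  let ?k = "\<lambda>c. card (Preim f c)"
  have "(\<Prod>c\<in>range f. fact (?k c) :: nat) = (\<Prod>t\<in>?k ` range f. \<Prod>c\<in>{c. c \<in> range f \<and> ?k c = t}. fact (?k c))"
    by (rule prod.image_gen) simp
  also have "\<dots> = (\<Prod>t\<in>?k ` range f. fact t ^ card (P f t))"
  proof (rule prod.cong)
    fix t assume "t \<in> ?k ` range f"
    then have t: "t \<ge> 1"
      by (auto simp: Preim_def Suc_le_eq card_gt_0_iff)
    have "{c. c \<in> range f \<and> ?k c = t} = P f t"
    proof
      show "P f t \<subseteq> {c. c \<in> range f \<and> ?k c = t}"
      proof
        fix c assume "c \<in> P f t"
        then have "?k c = t" by (simp add: P_def)
        with t have "Preim f c \<noteq> {}" by auto
        then show "c \<in> {c. c \<in> range f \<and> ?k c = t}" using \<open>?k c = t\<close>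
          by (auto simp: Preim_def)
      qed
    qed (auto simp: P_def)
    moreover have "(\<Prod>c\<in>P f t. fact (?k c)) = (\<Prod>c\<in>P f t. fact t)"
      by (rule prod.cong) (auto simp: P_def)
    ultimately show "(\<Prod>c\<in>{c. c \<in> range f \<and> ?k c = t}. fact (?k c)) = fact t ^ card (P f t)"
      by simp
  qed simp
  also have "\<dots> = (\<Prod>t = 1..u f. fact t ^ card (P f t))"
  proof (rule prod.mono_neutral_left)
    show "?k ` range f \<subseteq> {1..u f}"
    proof
      fix t assume "t \<in> ?k ` range f"
      then obtain x where t: "t = ?k (f x)" by auto
      have "x \<in> Preim f (f x)" by (simp add: Preim_def)
      then have "t \<ge> 1" using t by (auto simp: Suc_le_eq card_gt_0_iff)
      moreover have "t \<le> u f" unfolding u_def t by (rule Max_ge) auto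
      ultimately show "t \<in> {1..u f}" by simp
    qed
    show "\<forall>t\<in>{1..u f} - ?k ` range f. fact t ^ card (P f t) = (1::nat)"
    proof
      fix t assume t: "t \<in> {1..u f} - ?k ` range f"
      have "P f t = {}"
      proof (rule ccontr)
        assume "P f t \<noteq> {}"
        then obtain c where c: "?k c = t" by (auto simp: P_def)
        with t have "Preim f c \<noteq> {}" by auto
        then have "c \<in> range f" by (auto simp: Preim_def)
        with c t show False by auto
      qed
      then show "fact t ^ card (P f t) = (1::nat)" by simp
    qed
  qed simp
  finally show ?thesis .
qed

theorem lemma2p1:
  fixes f :: "'a::{group_add,finite} \<Rightarrow> 'a" and S :: "'a set"
  assumes "card S \<ge> u f"
  shows "Ag f ` {g. good f S g} = {A. admissible f A S}
    \<and> (\<forall>A. admissible f A S \<longrightarrow>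
          card {g. good f S g \<and> Ag f g = A} = (\<Prod>t = 1..u f. fact t ^ card (P f t)))
    \<and> (\<forall>g h. good f S g \<and> good f S h \<and> Ag f g = Ag f h \<longrightarrow>
          range g = range h \<and> range (\<lambda>x. g x + f x) = range (\<lambda>x. h x + f x))"
proof (intro conjI allI impI)
  have cnt: "card {g. good f S g \<and> Ag f g = A} = (\<Prod>t = 1..u f. fact t ^ card (P f t))"
    if "admissible f A S" for A
    using count_good[OF that] prod_regroup[of f] by simp
  show "Ag f ` {g. good f S g} = {A. admissible f A S}"
  proof
    show "Ag f ` {g. good f S g} \<subseteq> {A. admissible f A S}"
      using Ag_admissible by blast
    show "{A. admissible f A S} \<subseteq> Ag f ` {g. good f S g}"
    proof
      fix A assume "A \<in> {A. admissible f A S}"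
      then have A: "admissible f A S" by simp
      have "card {g. good f S g \<and> Ag f g = A} \<noteq> 0"
        using count_good[OF A] by simp
      then obtain g where "good f S g" "Ag f g = A"
        by (metis (mono_tags, lifting) card.empty empty_Collect_eq)
      then show "A \<in> Ag f ` {g. good f S g}" by blast
    qed
  qed
  fix A assume "admissible f A S"
  then show "card {g. good f S g \<and> Ag f g = A} = (\<Prod>t = 1..u f. fact t ^ card (P f t))"
    by (rule cnt)
next
  fix g h assume H: "good f S g \<and> good f S h \<and> Ag f g = Ag f h"
  then show "range g = range h" by (simp add: good_def)
  have "range (\<lambda>x. g x + f x) = fst ` Ag f g" for g
  proof
    show "range (\<lambda>x. g x + f x) \<subseteq> fst ` Ag f g"
    proof
      fix y assume "y \<in> range (\<lambda>x. g x + f x)"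
      then obtain x where x: "y = g x + f x" by auto
      have "(y, f x) \<in> Ag f g" using x by (auto simp: Ag_def)
      then show "y \<in> fst ` Ag f g" by force
    qed
    show "fst ` Ag f g \<subseteq> range (\<lambda>x. g x + f x)"
    proof
      fix y assume "y \<in> fst ` Ag f g"
      then obtain c where "(y, c) \<in> Ag f g" by force
      then have "\<exists>x. f x = c \<and> g x + f x = y" by (simp add: Ag_def)
      then obtain x where "y = g x + f x" by auto
      then show "y \<in> range (\<lambda>x. g x + f x)" by auto
    qed
  qed
  then show "range (\<lambda>x. g x + f x) = range (\<lambda>x. h x + f x)" using H by metis
qed

end
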